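(* Let $X$ be a non-negative continuous random variable with density $f$ satisfying $f(t)\le Ce^{-\lambda t}$ for some $C,\lambda>0$, whose support can be partitioned into finitely many intervals on each of which $f$ is differentiable and monotone, and such that $x\le C'\mathbb{E}[X_{\le x}]$ for all $x$ in some interval $(\chi_{\min},\chi_{\min}+\epsilon_0)$. Let $m\in(\chi_{\min},\chi_{\max})$ and let $Y$ be an $m$-reasonable random variable. Then there is $\delta<1$ depending only on $m$ such that for all positive integers $n$ and all $Q \le (n-n^{2/3})\mathbb{E}Y$, \[ \sum_{i=n+1}^\infty \Pr_{y_1,\ldots,y_{i-1}\sim Y}\Big[\sum_{j=1}^{i-1}y_j<Q\Big] = O(\delta^{n^{1/4}}), \] where the implied constant depends only on $m$.
   Context: $\chi_{\min} = \inf\{x:\Pr[X\ge x]>0\}$, $\chi_{\max} = \sup\{x:\Pr[X\le x]>0\}$. $X_{\le x}$ ($X_{\ge x}$) denotes $X$ conditioned on $X\le x$ ($X\ge x$). $Y$ is $m$-reasonable if either $Y=X_{\ge x}$ for some $x\le m$ or $Y=X_{\le x}$ for some $x\ge m$. $y_1,y_2,\ldots$ are independent copies of $Y$. The hypotheses on $X$ are the paper's standing assumptions. *)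

theory Defs
  imports "HOL-Probability.Probability"
begin

definition law :: "(real \<Rightarrow> real) \<Rightarrow> real measure" where
  "law f = density lborel (\<lambda>t. ennreal (f t))"

(* X conditioned on X \<le> x, resp. X \<ge> x (library: uniform_measure = conditioning) *)
definition cond_le :: "real measure \<Rightarrow> real \<Rightarrow> real measure" where
  "cond_le M x = uniform_measure M {..x}"

definition cond_ge :: "real measure \<Rightarrow> real \<Rightarrow> real measure" where
  "cond_ge M x = uniform_measure M {x..}"

definition expect :: "real measure \<Rightarrow> real" where
  "expect M = (\<integral>t. t \<partial>M)"

definition chi_min :: "real measure \<Rightarrow> real" where
  "chi_min M = Inf {x. measure M {..x} > 0}"

definition chi_max :: "real measure \<Rightarrow> ereal" where
  "chi_max M = Sup {ereal x | x. measure M {x..} > 0}"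

definition reasonable :: "real measure \<Rightarrow> real \<Rightarrow> real measure \<Rightarrow> bool" where
  "reasonable M m Y \<longleftrightarrow>
     (\<exists>x. x \<le> m \<and> Y = cond_ge M x) \<or> (\<exists>x. x \<ge> m \<and> Y = cond_le M x)"

definition sum_lt_prob :: "real measure \<Rightarrow> nat \<Rightarrow> real \<Rightarrow> real" where
  "sum_lt_prob Y k Q =
     measure (PiM {..<k} (\<lambda>_. Y))
       {y \<in> space (PiM {..<k} (\<lambda>_. Y)). (\<Sum>j<k. y j) < Q}"

end

theory Submission
  imports Defs
begin


lemma exp_neg_quad: fixes u :: real assumes "0 \<le> u" shows "exp (- u) \<le> 1 - u + u^2/2"
proof -
  let ?g = "\<lambda>u::real. 1 - u + u^2/2 - exp (- u)"
  have d: "\<And>x. (?g has_real_derivative (-1 + x + exp (- x))) (at x)"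
    by (auto intro!: derivative_eq_intros simp: power2_eq_square)
  have "?g 0 \<le> ?g u"
  proof (rule DERIV_nonneg_imp_nondecreasing[OF assms])
    fix x assume "0 \<le> x" "x \<le> u"
    show "\<exists>y. (?g has_real_derivative y) (at x) \<and> 0 \<le> y"
      using d[of x] exp_ge_add_one_self[of "-x"] by auto
  qed
  then show ?thesis by simp
qed

lemma chernoff:
  fixes Y :: "real measure" and t Q :: real and k :: nat
  assumes Yp: "prob_space Y" and Ys: "sets Y = sets borel"
    and nn: "AE y in Y. 0 \<le> y" and i1: "integrable Y (\<lambda>y. y)" and i2: "integrable Y (\<lambda>y. y^2)"
    and t: "0 \<le> t"
  shows "sum_lt_prob Y k Q \<le> exp (t*Q - k*t*expect Y + k*t^2*(\<integral>y. y^2 \<partial>Y)/2)"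
proof -
  interpret Y: prob_space Y by fact
  interpret P: product_prob_space "\<lambda>_. Y" "{..<k}" by unfold_locales
  define P where "P = PiM {..<k} (\<lambda>_. Y)"
  define A where "A = {y \<in> space P. (\<Sum>j<k. y j) < Q}"
  have mY[measurable]: "(\<lambda>y::real. g y) \<in> borel_measurable Y" if "g \<in> borel_measurable borel" for g
    using that measurable_cong_sets[OF Ys refl] by auto
  have Am: "A \<in> sets P" unfolding A_def P_def by measurable
  define mu where "mu = expect Y"
  define s where "s = (\<integral>y. y^2 \<partial>Y)"
  have "emeasure P A = (\<integral>\<^sup>+x. indicator A x \<partial>P)" using Am by simp
  also have "\<dots> \<le> (\<integral>\<^sup>+x. ennreal (exp (t*Q)) * (\<Prod>j<k. ennreal (exp (- t * x j))) \<partial>P)"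
  proof (rule nn_integral_mono)
    fix x assume "x \<in> space P"
    show "indicator A x \<le> ennreal (exp (t*Q)) * (\<Prod>j<k. ennreal (exp (- t * x j)))"
    proof (cases "x \<in> A")
      case True
      then have "(\<Sum>j<k. x j) < Q" by (auto simp: A_def)
      then have "0 \<le> t*(Q - (\<Sum>j<k. x j))" using t by simp
      also have "t*(Q - (\<Sum>j<k. x j)) = t*Q + (\<Sum>j<k. - t * x j)"
        by (simp add: sum_distrib_left sum_negf algebra_simps)
      finally have "0 \<le> t*Q + (\<Sum>j<k. - t * x j)" .
      then have "1 \<le> exp (t*Q + (\<Sum>j<k. - t * x j))" by simp
      also have "\<dots> = exp (t*Q) * (\<Prod>j<k. exp (- t * x j))" by (simp add: exp_add exp_sum)
      finally have "ennreal 1 \<le> ennreal (exp (t*Q) * (\<Prod>j<k. exp (- t * x j)))" by (rule ennreal_leI)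
      moreover have "ennreal (exp (t*Q)) * (\<Prod>j<k. ennreal (exp (- t * x j))) = ennreal (exp (t*Q) * (\<Prod>j<k. exp (- t * x j)))"
        by (simp add: prod_ennreal ennreal_mult prod_nonneg)
      ultimately show ?thesis using True by simp
    qed simp
  qed
  also have "\<dots> = ennreal (exp (t*Q)) * (\<integral>\<^sup>+x. (\<Prod>j<k. ennreal (exp (- t * x j))) \<partial>P)"
    unfolding P_def by (rule nn_integral_cmult) measurable
  finally have E1: "emeasure P A \<le> ennreal (exp (t*Q)) * (\<integral>\<^sup>+x. (\<Prod>j<k. ennreal (exp (- t * x j))) \<partial>P)" .
  have E2: "(\<integral>\<^sup>+x. (\<Prod>j<k. ennreal (exp (- t * x j))) \<partial>P) = (\<Prod>j<k. (\<integral>\<^sup>+y. ennreal (exp (- t * y)) \<partial>Y))"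
    unfolding P_def using P.product_nn_integral_prod[of "{..<k}" "\<lambda>_ y. ennreal (exp (- t * y))"] by simp
  have "(\<integral>\<^sup>+y. ennreal (exp (- t * y)) \<partial>Y) \<le> ennreal (exp (- t*mu + t^2* s /2))"
  proof -
    have "(\<integral>\<^sup>+y. ennreal (exp (- t * y)) \<partial>Y) \<le> (\<integral>\<^sup>+y. ennreal (1 - t*y + t^2/2 * y^2) \<partial>Y)"
    proof (rule nn_integral_mono_AE)
      show "AE y in Y. ennreal (exp (- t * y)) \<le> ennreal (1 - t*y + t^2/2 * y^2)"
        using nn
      proof eventually_elim
        case (elim y)
        have "exp (- (t*y)) \<le> 1 - t*y + (t*y)^2/2" by (rule exp_neg_quad) (use elim t in simp)
        then show ?case by (intro ennreal_leI) (simp add: power_mult_distrib)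
      qed
    qed
    also have "\<dots> = ennreal (\<integral>y. (1 - t*y + t^2/2 * y^2) \<partial>Y)"
    proof (rule nn_integral_eq_integral)
      show "integrable Y (\<lambda>y. 1 - t*y + t^2/2 * y^2)" using i1 i2 by auto
      show "AE y in Y. 0 \<le> 1 - t*y + t^2/2 * y^2"
      proof (rule AE_I2)
        fix y :: real
        have "0 \<le> (1 - t*y)^2/2 + 1/2" by simp
        also have "\<dots> \<le> 1 - t*y + t^2/2 * y^2"
          by (simp add: power2_eq_square algebra_simps field_simps)
        finally show "0 \<le> 1 - t*y + t^2/2 * y^2" .
      qed
    qed
    also have "(\<integral>y. (1 - t*y + t^2/2 * y^2) \<partial>Y) = 1 - t*mu + t^2/2 * s"
      using i1 i2 by (simp add: mu_def s_def expect_def Y.prob_space)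
    also have "\<dots> \<le> exp (- t*mu + t^2* s /2)" using exp_ge_add_one_self[of "- t*mu + t^2* s /2"] by (simp add: algebra_simps)
    finally show ?thesis by (simp add: ennreal_leI)
  qed
  then have "(\<Prod>j<k. (\<integral>\<^sup>+y. ennreal (exp (- t * y)) \<partial>Y)) \<le> (\<Prod>j<k. ennreal (exp (- t*mu + t^2* s /2)))"
    by (intro prod_mono_ennreal) auto
  with E1 E2 have "emeasure P A \<le> ennreal (exp (t*Q)) * (\<Prod>j<k. ennreal (exp (- t*mu + t^2* s /2)))"
    by (metis (no_types, lifting) mult_left_mono order_trans zero_le)
  also have "\<dots> = ennreal (exp (t*Q - k*t*mu + k*t^2* s /2))"
  proof -
    have "exp (t*Q - k*t*mu + k*t^2* s /2) = exp (t*Q) * exp (- t*mu + t^2* s /2) ^ k"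
      by (simp add: exp_of_nat_mult[symmetric] exp_add[symmetric] algebra_simps)
    then show ?thesis by (simp add: ennreal_mult ennreal_power)
  qed
  finally have "emeasure P A \<le> ennreal (exp (t*Q - k*t*mu + k*t^2* s /2))" .
  moreover have "emeasure P A = ennreal (measure P A)"
    unfolding P_def by (rule P.emeasure_eq_measure)
  ultimately have "measure P A \<le> exp (t*Q - k*t*mu + k*t^2* s /2)"
    by (simp add: ennreal_le_iff[symmetric] del: ennreal_le_iff)
  then show ?thesis unfolding sum_lt_prob_def A_def P_def mu_def s_def by simp
qed




lemma series_bound:
  fixes c0 u :: real and P :: "nat \<Rightarrow> real"
  assumes c0: "0 < c0" and u: "1 \<le> u"
    and P0: "\<And>j. 0 \<le> P j" and P1: "\<And>j. P j \<le> exp (- c0 * (u + j / u))"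
  shows "summable P \<and> suminf P \<le> (1 + 2 / c0^2) * exp (- (c0/2) * u)"
proof -
  define r where "r = exp (- c0 / u)"
  have r0: "0 < r" and r1: "r < 1" using c0 u by (auto simp: r_def)
  have geq: "\<And>j. exp (- c0 * (u + j / u)) = exp (- c0 * u) * r ^ j"
    by (simp add: r_def exp_of_nat_mult[symmetric] exp_add[symmetric] algebra_simps)
  have sg: "summable (\<lambda>j. exp (- c0 * u) * r ^ j)"
    using r0 r1 by (intro summable_mult summable_geometric) auto
  have sP: "summable P"
    by (rule summable_comparison_test[OF _ sg]) (use P0 P1 geq in auto)
  have "suminf P \<le> (\<Sum>j. exp (- c0 * u) * r ^ j)"
    by (rule suminf_le[OF _ sP sg]) (use P1 geq in auto)
  also have "\<dots> = exp (- c0 * u) / (1 - r)"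
    using r0 r1 by (simp add: suminf_mult suminf_geometric divide_inverse)
  also have "1 / (1 - r) \<le> 1 + u / c0"
  proof -
    have x0: "0 < c0 / u" using c0 u by auto
    have "1 + c0/u \<le> exp (c0/u)" by (rule exp_ge_add_one_self)
    then have "r * (1 + c0/u) \<le> 1" by (simp add: r_def exp_minus field_simps)
    then have "1 \<le> (1 - r) * (1 + u/c0)" using c0 u
      by (simp add: field_simps)
    then show ?thesis using r1 by (simp add: field_simps)
  qed
  then have "exp (- c0 * u) / (1 - r) \<le> exp (- c0 * u) * (1 + u / c0)"
    using r1 by (simp add: divide_inverse)
  also have "\<dots> \<le> (1 + 2 / c0^2) * exp (- (c0/2) * u)"
  proof -
    define E where "E = exp (c0*u/2)"
    have E0: "0 < E" by (simp add: E_def)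
    have em: "exp (- (c0/2) * u) = 1 / E" unfolding E_def
      by (simp add: exp_minus[symmetric] inverse_eq_divide[symmetric])
    have e: "exp (- c0 * u) = 1 / (E * E)" unfolding E_def
      by (simp add: exp_add[symmetric] exp_minus[symmetric] inverse_eq_divide[symmetric])
    have "1 + c0*u/2 \<le> E" using exp_ge_add_one_self[of "c0*u/2"] by (simp add: E_def)
    then have h1: "u/c0 \<le> (2/c0^2) * E" using c0 by (simp add: field_simps power2_eq_square)
    have h2: "1 \<le> E" using c0 u by (simp add: E_def)
    have "(1 + u/c0) \<le> (1 + 2/c0^2) * E" using h1 h2 c0 by (simp add: algebra_simps)
    then have "(1 + u/c0) / (E*E) \<le> ((1 + 2/c0^2) * E) / (E*E)"
      using E0 by (intro divide_right_mono) auto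
    also have "((1 + 2/c0^2) * E) / (E*E) = (1 + 2/c0^2) * (1/E)" using E0 by simp
    finally show ?thesis unfolding em e by (simp add: algebra_simps)
  qed
  finally show ?thesis using sP by simp
qed




locale dens =
  fixes f :: "real \<Rightarrow> real" and C lam :: real
  assumes f_meas[measurable]: "f \<in> borel_measurable borel"
    and f_nonneg: "\<And>t. 0 \<le> f t"
    and f_zero_neg: "\<And>t. t < 0 \<Longrightarrow> f t = 0"
    and f_prob: "(\<integral>\<^sup>+ t. ennreal (f t) \<partial>lborel) = 1"
    and C_pos: "C > 0" and lam_pos: "lam > 0"
    and f_tail: "\<And>t. t \<ge> 0 \<Longrightarrow> f t \<le> C * exp (- lam * t)"
begin

abbreviation "M \<equiv> law f"

lemma sets_M[simp, measurable_cong]: "sets M = sets borel"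
  by (simp add: law_def)

lemma space_M[simp]: "space M = UNIV"
  by (simp add: law_def)

lemma prob_M: "prob_space M"
  by (rule prob_spaceI) (simp add: law_def emeasure_density f_prob)

lemma fx_nonneg: "0 \<le> f x * x"
  by (cases "x < 0") (auto simp: f_zero_neg f_nonneg)

lemma int_f: "integrable lborel f"
  by (rule integrableI_nonneg) (auto simp: f_nonneg f_prob)

lemma int_f2: "integrable lborel (\<lambda>x. f x * x^2)"
proof -
  have "integrable lborel (\<lambda>x. erlang_density 0 lam x * x^2)"
  proof (rule integrableI_nonneg)
    show "AE x in lborel. 0 \<le> erlang_density 0 lam x * x^2"
      by (rule AE_I2) (simp add: lam_pos less_imp_le)
    show "(\<integral>\<^sup>+x. ennreal (erlang_density 0 lam x * x^2) \<partial>lborel) < \<infinity>"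
      by (subst nn_integral_erlang_ith_moment[OF lam_pos]) (simp add: ennreal_divide_eq_top_iff)
  qed simp
  then have i: "integrable lborel (\<lambda>x. (C/lam) * (erlang_density 0 lam x * x^2))" by simp
  show ?thesis
  proof (rule Bochner_Integration.integrable_bound[OF i])
    show "AE x in lborel. norm (f x * x^2) \<le> norm ((C/lam) * (erlang_density 0 lam x * x^2))"
    proof (rule AE_I2)
      fix x :: real
      show "norm (f x * x^2) \<le> norm ((C/lam) * (erlang_density 0 lam x * x^2))"
      proof (cases "x < 0")
        case True then show ?thesis by (simp add: f_zero_neg)
      next
        case False
        then have "f x * x^2 \<le> C * exp (- lam * x) * x^2"
          using f_tail[of x] by (intro mult_right_mono) auto
        also have "\<dots> = (C/lam) * (erlang_density 0 lam x * x^2)"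
          using False lam_pos by (simp add: erlang_density_def)
        finally show ?thesis using False C_pos lam_pos f_nonneg[of x]
          by (simp add: erlang_density_def)
      qed
    qed
  qed simp
qed

lemma int_f1: "integrable lborel (\<lambda>x. f x * x)"
proof -
  have i: "integrable lborel (\<lambda>x. f x + f x * x^2)" using int_f int_f2 by auto
  show ?thesis
  proof (rule Bochner_Integration.integrable_bound[OF i])
  show "AE x in lborel. norm (f x * x) \<le> norm (f x + f x * x^2)"
  proof (rule AE_I2)
    fix x :: real
    have s0: "0 \<le> (\<bar>x\<bar> - 1) * (\<bar>x\<bar> - 1)" by simp
    have s1: "\<bar>x\<bar> * \<bar>x\<bar> = x * x" by (simp add: abs_mult_self_eq)
    have "\<bar>x\<bar> \<le> 1 + x^2" using s0 s1 by (simp add: power2_eq_square algebra_simps)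
    then have "f x * \<bar>x\<bar> \<le> f x * (1 + x^2)" by (intro mult_left_mono) (auto simp: f_nonneg)
    then show "norm (f x * x) \<le> norm (f x + f x * x^2)"
      using f_nonneg[of x] by (simp add: abs_mult algebra_simps)
  qed
qed simp
qed

lemma emeasure_M: "A \<in> sets borel \<Longrightarrow> emeasure M A = (\<integral>\<^sup>+ x. ennreal (f x) * indicator A x \<partial>lborel)"
  by (simp add: law_def emeasure_density)

lemma uniform_eq:
  assumes A[measurable]: "A \<in> sets borel" and p: "measure M A > 0"
  shows "uniform_measure M A = density lborel (\<lambda>x. ennreal (f x * indicator A x / measure M A))"
proof -
  interpret prob_space M by (rule prob_M)
  have e: "emeasure M A = ennreal (measure M A)" by (rule emeasure_eq_measure)
  have "uniform_measure M A = density lborel (\<lambda>x. ennreal (f x) * (indicator A x / emeasure M A))"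
    unfolding uniform_measure_def law_def by (subst density_density_eq) auto
  also have "\<dots> = density lborel (\<lambda>x. ennreal (f x * indicator A x / measure M A))"
  proof (rule density_cong)
    show "AE x in lborel. ennreal (f x) * (indicator A x / emeasure M A) = ennreal (f x * indicator A x / measure M A)"
    proof (rule AE_I2)
      fix x
      show "ennreal (f x) * (indicator A x / emeasure M A) = ennreal (f x * indicator A x / measure M A)"
        using p f_nonneg[of x] divide_ennreal[of 1 "measure M A"] unfolding e
        by (cases "x \<in> A") (simp_all add: ennreal_mult[symmetric] divide_inverse)
    qed
  qed auto
  finally show ?thesis .
qed

lemma meas_M: "A \<in> sets borel \<Longrightarrow> measure M A = enn2real (\<integral>\<^sup>+ x. ennreal (f x) * indicator A x \<partial>lborel)"
  by (simp add: measure_def emeasure_M)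

lemma Y_props:
  assumes A[measurable]: "A \<in> sets borel" and p: "0 < measure M A"
  shows "prob_space (uniform_measure M A)" "sets (uniform_measure M A) = sets borel"
    "AE y in uniform_measure M A. 0 \<le> y"
    "integrable (uniform_measure M A) (\<lambda>y. y)" "integrable (uniform_measure M A) (\<lambda>y. y^2)"
    "expect (uniform_measure M A) = (\<integral>x. indicator A x * (f x * x) \<partial>lborel) / measure M A"
    "(\<integral>y. y^2 \<partial>uniform_measure M A) = (\<integral>x. indicator A x * (f x * x^2) \<partial>lborel) / measure M A"
proof -
  interpret prob_space M by (rule prob_M)
  define p where "p = measure M A"
  have p0: "0 < p" using p by (simp add: p_def)
  define h where "h x = f x * indicator A x / p" for x
  have hm[measurable]: "h \<in> borel_measurable borel" unfolding h_def by measurable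
  have hn: "\<And>x. 0 \<le> h x" using p0 f_nonneg by (simp add: h_def)
  have Y: "uniform_measure M A = density lborel (\<lambda>x. ennreal (h x))"
    unfolding h_def p_def by (rule uniform_eq[OF A p])
  show "prob_space (uniform_measure M A)"
    by (rule prob_space_uniform_measure) (use p emeasure_eq_measure in auto)
  show "sets (uniform_measure M A) = sets borel" by simp
  show "AE y in uniform_measure M A. 0 \<le> y"
    unfolding Y
  proof (subst AE_density, measurable, rule AE_I2, intro impI)
    fix x assume "0 < ennreal (h x)"
    then have "f x \<noteq> 0" by (auto simp: h_def)
    then show "0 \<le> x" using f_zero_neg by (metis not_le)
  qed
  have eqf: "\<And>g x. h x * g x = indicator A x * (f x * g x) / p"
    by (auto simp: h_def)
  have int: "integrable (uniform_measure M A) g" if "integrable lborel (\<lambda>x. f x * g x)" and [measurable]: "g \<in> borel_measurable borel" for g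
  proof -
    have "integrable lborel (\<lambda>x. indicator A x * (f x * g x) / p)"
      using integrable_mult_indicator[of A lborel "\<lambda>x. f x * g x"] that(1) by simp
    then show ?thesis unfolding Y by (subst integrable_density) (auto simp: hn eqf)
  qed
  have intg: "integral\<^sup>L (uniform_measure M A) g = (\<integral>x. indicator A x * (f x * g x) \<partial>lborel) / p"
    if [measurable]: "g \<in> borel_measurable borel" for g
    unfolding Y by (subst integral_density) (auto simp: hn eqf)
  show "integrable (uniform_measure M A) (\<lambda>y. y)" using int[OF int_f1] by simp
  show "integrable (uniform_measure M A) (\<lambda>y. y^2)" using int[OF int_f2] by simp
  show "expect (uniform_measure M A) = (\<integral>x. indicator A x * (f x * x) \<partial>lborel) / measure M A"
    unfolding expect_def using intg[of "\<lambda>x. x"] by (simp add: p_def)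
  show "(\<integral>y. y^2 \<partial>uniform_measure M A) = (\<integral>x. indicator A x * (f x * x^2) \<partial>lborel) / measure M A"
    using intg[of "\<lambda>x. x^2"] by (simp add: p_def)
qed

lemma pos_mean:
  assumes B[measurable]: "B \<in> sets borel" and p: "0 < measure M B"
  shows "0 < (\<integral>x. indicator B x * (f x * x) \<partial>lborel)"
proof -
  have i: "integrable lborel (\<lambda>x. indicator B x * (f x * x))"
    using integrable_mult_indicator[OF _ int_f1, of B] by simp
  have nn: "AE x in lborel. 0 \<le> indicator B x * (f x * x)"
    by (rule AE_I2) (simp add: fx_nonneg)
  have "(\<integral>x. indicator B x * (f x * x) \<partial>lborel) \<noteq> 0"
  proof
    assume "(\<integral>x. indicator B x * (f x * x) \<partial>lborel) = 0"
    then have ae: "AE x in lborel. indicator B x * (f x * x) = 0"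
      using integral_nonneg_eq_0_iff_AE[OF i nn] by simp
    have "AE x in lborel. ennreal (f x) * indicator B x = 0"
      using ae AE_lborel_singleton[of "0::real"]
      by eventually_elim (auto split: split_indicator)
    then have "(\<integral>\<^sup>+ x. ennreal (f x) * indicator B x \<partial>lborel) = 0"
      by (subst nn_integral_0_iff_AE) auto
    then have "measure M B = 0" by (simp add: meas_M)
    then show False using p by simp
  qed
  moreover have "0 \<le> (\<integral>x. indicator B x * (f x * x) \<partial>lborel)"
    by (rule integral_nonneg_AE[OF nn])
  ultimately show ?thesis by simp
qed

lemma Y_bounds:
  assumes A[measurable]: "A \<in> sets borel" and B[measurable]: "B \<in> sets borel"
    and p0: "0 < p0" "p0 \<le> measure M A" and AB: "\<And>x. 0 \<le> x \<Longrightarrow> x \<in> B \<Longrightarrow> x \<in> A"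
  shows "(\<integral>x. indicator B x * (f x * x) \<partial>lborel) \<le> expect (uniform_measure M A)"
    "(\<integral>y. y^2 \<partial>uniform_measure M A) \<le> (\<integral>x. f x * x^2 \<partial>lborel) / p0"
proof -
  interpret prob_space M by (rule prob_M)
  define p where "p = measure M A"
  have pp: "0 < p" "p \<le> 1" "p0 \<le> p" using p0 by (auto simp: p_def)
  have iA: "integrable lborel (\<lambda>x. indicator A x * (f x * x))"
    using integrable_mult_indicator[OF _ int_f1, of A] by simp
  have iB: "integrable lborel (\<lambda>x. indicator B x * (f x * x))"
    using integrable_mult_indicator[OF _ int_f1, of B] by simp
  have iA2: "integrable lborel (\<lambda>x. indicator A x * (f x * x^2))"
    using integrable_mult_indicator[OF _ int_f2, of A] by simp
  have "(\<integral>x. indicator B x * (f x * x) \<partial>lborel) \<le> (\<integral>x. indicator A x * (f x * x) \<partial>lborel)"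
  proof (rule integral_mono[OF iB iA])
    fix x :: real
    show "indicator B x * (f x * x) \<le> indicator A x * (f x * x)"
    proof (cases "x < 0")
      case True then show ?thesis by (simp add: f_zero_neg)
    next
      case False then show ?thesis using AB[of x] fx_nonneg[of x] by (auto split: split_indicator)
    qed
  qed
  also have "\<dots> \<le> (\<integral>x. indicator A x * (f x * x) \<partial>lborel) / p"
  proof -
    have "0 \<le> (\<integral>x. indicator A x * (f x * x) \<partial>lborel)"
      by (rule integral_nonneg_AE) (simp add: fx_nonneg)
    then show ?thesis using pp by (simp add: le_divide_eq mult_left_le)
  qed
  also have "\<dots> = expect (uniform_measure M A)"
    using Y_props(6)[OF A] pp by (simp add: p_def)
  finally show "(\<integral>x. indicator B x * (f x * x) \<partial>lborel) \<le> expect (uniform_measure M A)" .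
  have "(\<integral>y. y^2 \<partial>uniform_measure M A) = (\<integral>x. indicator A x * (f x * x^2) \<partial>lborel) / p"
    using Y_props(7)[OF A] pp by (simp add: p_def)
  also have "\<dots> \<le> (\<integral>x. f x * x^2 \<partial>lborel) / p"
    by (intro divide_right_mono integral_mono[OF iA2 int_f2])
       (use pp f_nonneg in \<open>auto split: split_indicator\<close>)
  also have "\<dots> \<le> (\<integral>x. f x * x^2 \<partial>lborel) / p0"
  proof -
    have "0 \<le> (\<integral>x. f x * x^2 \<partial>lborel)" by (rule integral_nonneg_AE) (simp add: f_nonneg)
    then show ?thesis using pp p0 by (intro divide_left_mono) auto
  qed
  finally show "(\<integral>y. y^2 \<partial>uniform_measure M A) \<le> (\<integral>x. f x * x^2 \<partial>lborel) / p0" .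
qed

lemma neg_null: "x < 0 \<Longrightarrow> measure M {..x} = 0"
proof -
  assume x: "x < 0"
  have "(\<integral>\<^sup>+ t. ennreal (f t) * indicator {..x} t \<partial>lborel) = (\<integral>\<^sup>+ t. 0 \<partial>(lborel::real measure))"
    by (rule nn_integral_cong) (use x f_zero_neg in \<open>auto split: split_indicator\<close>)
  then show ?thesis by (simp add: meas_M)
qed

lemma m_le: assumes "chi_min M < m" shows "0 < measure M {..m}"
proof -
  interpret prob_space M by (rule prob_M)
  define S where "S = {x. measure M {..x} > 0}"
  have ne: "S \<noteq> {}"
  proof
    assume "S = {}"
    then have "\<And>n::nat. {..real n} \<in> null_sets M"
    proof -
      fix n :: nat
      have "\<not> measure M {..real n} > 0" using \<open>S = {}\<close> by (auto simp: S_def)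
      then have "measure M {..real n} = 0" using measure_nonneg[of M "{..real n}"] by linarith
      then show "{..real n} \<in> null_sets M" by (auto simp: null_sets_def emeasure_eq_measure)
    qed
    then have "(\<Union>n::nat. {..real n}) \<in> null_sets M" by blast
    moreover have "(\<Union>n::nat. {..real n}) = UNIV"
      by (auto intro: real_arch_simple)
    ultimately show False by (simp add: null_sets_def emeasure_space_1[simplified])
  qed
  have bdd: "bdd_below S"
    by (rule bdd_belowI[of _ 0]) (use neg_null in \<open>force simp: S_def not_le[symmetric]\<close>)
  have "Inf S < m" using assms by (simp add: chi_min_def S_def)
  then obtain x where "x \<in> S" "x < m" using cInf_less_iff[OF ne bdd] by auto
  then have "0 < measure M {..x}" by (simp add: S_def)
  also have "\<dots> \<le> measure M {..m}" using \<open>x < m\<close> by (intro finite_measure_mono) auto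
  finally show ?thesis .
qed

lemma m_ge: assumes "ereal m < chi_max M" shows "0 < measure M {m..}"
proof -
  interpret prob_space M by (rule prob_M)
  from assms obtain z where "z \<in> {ereal x | x. measure M {x..} > 0}" "ereal m < z"
    unfolding chi_max_def by (auto simp: less_Sup_iff)
  then obtain x where "measure M {x..} > 0" "m < x" by auto
  then show ?thesis using finite_measure_mono[of "{x..}" "{m..}"] by auto
qed

end



lemma expo:
  fixes u S0 mu0 mu s Q t k j :: real
  assumes u: "1 \<le> u" and S0: "0 < S0" and m0: "0 < mu0" "mu0 \<le> mu" and s: "s \<le> S0"
    and Q: "Q \<le> (u^3 - u^2) * mu" and t: "t = mu / (S0 * u)" and k: "k = u^3 + j" and j: "0 \<le> j"
  shows "t*Q - k*t*mu + k*t^2* s /2 \<le> - (mu0^2 / (2*S0)) * (u + j/u)"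
proof -
  have t0: "0 \<le> t" using t u S0 m0 by simp
  have k0: "0 \<le> k" using k u j by simp
  have 1: "t*Q \<le> t*((u^3-u^2)*mu)" using Q t0 by (rule mult_left_mono)
  have 2: "k*t^2* s /2 \<le> k*t^2*S0/2" using k0 s by (simp add: mult_left_mono divide_right_mono)
  have 3: "t*((u^3-u^2)*mu) - k*t*mu + k*t^2*S0/2 = (mu^2/S0)*(-u/2 - j/u + j/(2*u^2))"
    using u S0 unfolding t k by (simp add: field_simps power2_eq_square power3_eq_cube)
  have 4: "-u/2 - j/u + j/(2*u^2) \<le> -(u + j/u)/2"
  proof -
    have "j/(2*u^2) \<le> j/(2*u)" using u j
      by (intro divide_left_mono) (auto simp: power2_eq_square intro: order_trans[of _ u])
    moreover have "j/u = j/(2*u) + j/(2*u)" by (simp add: field_simps)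
    moreover have "-(u + j/u)/2 = -u/2 - j/(2*u)" using u by (simp add: field_simps)
    ultimately show ?thesis by linarith
  qed
  have mm: "mu0^2 \<le> mu^2" using m0 by (intro power_mono) auto
  have "0 \<le> j/u" using u j by simp
  then have "0 \<le> (u + j/u)/2" using u by simp
  then have X: "-(u + j/u)/2 \<le> 0" by simp
  have "(mu^2/S0)*(-u/2 - j/u + j/(2*u^2)) \<le> (mu^2/S0)*(-(u + j/u)/2)"
    using 4 S0 by (intro mult_left_mono) auto
  also have "\<dots> \<le> (mu0^2/S0)*(-(u + j/u)/2)"
    using mm S0 X by (intro mult_right_mono_neg divide_right_mono) auto
  also have "\<dots> = - (mu0^2 / (2*S0)) * (u + j/u)" using S0 u by (simp add: field_simps)
  finally show ?thesis using 1 2 3 by linarith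
qed

context dens
begin

lemma main:
  assumes m1: "chi_min M < m" and m2: "ereal m < chi_max M"
  shows "\<exists>\<delta> K. 0 < \<delta> \<and> \<delta> < 1 \<and>
           (\<forall>Y n Q. reasonable M m Y \<longrightarrow> n \<ge> 1 \<longrightarrow>
              Q \<le> (real n - real n powr (2/3)) * expect Y \<longrightarrow>
              summable (\<lambda>j. sum_lt_prob Y (n + j) Q) \<and>
              (\<Sum>j. sum_lt_prob Y (n + j) Q) \<le> K * \<delta> powr (real n powr (1/4)))"
proof -
  interpret prob_space M by (rule prob_M)
  define pa where "pa = measure M {m..}"
  define pb where "pb = measure M {..m}"
  define p0 where "p0 = min pa pb"
  have p0: "0 < p0" using m_le[OF m1] m_ge[OF m2] by (simp add: p0_def pa_def pb_def)
  define mua where "mua = (\<integral>x. indicator {m..} x * (f x * x) \<partial>lborel)"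
  define mub where "mub = (\<integral>x. indicator {..m} x * (f x * x) \<partial>lborel)"
  define mu0 where "mu0 = min mua mub"
  have mu0: "0 < mu0" using pos_mean[of "{m..}"] pos_mean[of "{..m}"] m_le[OF m1] m_ge[OF m2]
    by (simp add: mu0_def mua_def mub_def)
  define E2 where "E2 = (\<integral>x. f x * x^2 \<partial>lborel)"
  have E2: "0 \<le> E2" unfolding E2_def by (rule integral_nonneg_AE) (simp add: f_nonneg)
  define S0 where "S0 = E2 / p0 + 1"
  have S0: "0 < S0" using E2 p0 by (simp add: S0_def add_nonneg_pos)
  define c0 where "c0 = mu0^2 / (2*S0)"
  have c0: "0 < c0" using mu0 S0 by (simp add: c0_def)
  have key: "prob_space Y \<and> sets Y = sets borel \<and> (AE y in Y. 0 \<le> y) \<and> integrable Y (\<lambda>y. y)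
      \<and> integrable Y (\<lambda>y. y^2) \<and> mu0 \<le> expect Y \<and> (\<integral>y. y^2 \<partial>Y) \<le> S0"
    if "reasonable M m Y" for Y
  proof -
    from that obtain A B where A[measurable]: "A \<in> sets borel" and B[measurable]: "B \<in> sets borel"
      and Y: "Y = uniform_measure M A" and pA: "p0 \<le> measure M A"
      and AB: "\<And>x. 0 \<le> x \<Longrightarrow> x \<in> B \<Longrightarrow> x \<in> A" and muB: "mu0 \<le> (\<integral>x. indicator B x * (f x * x) \<partial>lborel)"
    proof (unfold reasonable_def, elim disjE exE conjE)
      fix x assume x: "x \<le> m" "Y = cond_ge M x"
      show ?thesis
      proof (rule that[of "{x..}" "{m..}"])
        show "p0 \<le> measure M {x..}" using x finite_measure_mono[of "{m..}" "{x..}"]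
          by (auto simp: p0_def pa_def)
      qed (use x in \<open>auto simp: cond_ge_def mu0_def mua_def\<close>)
    next
      fix x assume x: "m \<le> x" "Y = cond_le M x"
      show ?thesis
      proof (rule that[of "{..x}" "{..m}"])
        show "p0 \<le> measure M {..x}" using x finite_measure_mono[of "{..m}" "{..x}"]
          by (auto simp: p0_def pb_def)
      qed (use x in \<open>auto simp: cond_le_def mu0_def mub_def\<close>)
    qed
    have pA0: "0 < measure M A" using p0 pA by linarith
    have b1: "mu0 \<le> expect Y" using muB Y_bounds(1)[OF A B p0 pA AB] Y by simp
    have b2: "(\<integral>y. y^2 \<partial>Y) \<le> S0"
      using Y_bounds(2)[OF A B p0 pA AB] Y by (simp add: S0_def E2_def)
    show ?thesis using Y_props[OF A pA0] b1 b2 unfolding Y by simp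
  qed
  define \<delta> where "\<delta> = exp (- c0 / 2)"
  define K where "K = 1 + 2 / c0^2"
  show ?thesis
  proof (intro exI conjI allI impI)
    show "0 < \<delta>" "\<delta> < 1" using c0 by (auto simp: \<delta>_def)
    fix Y n Q
    assume r: "reasonable M m Y" and n: "(1::nat) \<le> n" and Q: "Q \<le> (real n - real n powr (2/3)) * expect Y"
    note kY = key[OF r]
    define mu where "mu = expect Y"
    define s where "s = (\<integral>y. y^2 \<partial>Y)"
    define u where "u = real n powr (1/3)"
    have n1: "1 \<le> real n" using n by simp
    have u1: "1 \<le> u" unfolding u_def by (rule ge_one_powr_ge_zero) (use n1 in auto)
    have u3: "u^3 = real n" unfolding u_def using n1 by (subst powr_power) auto
    have u2: "u^2 = real n powr (2/3)" unfolding u_def using n1 by (subst powr_power) auto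
    define t where "t = mu / (S0 * u)"
    have t0: "0 \<le> t" using kY mu0 S0 u1 by (simp add: t_def mu_def)
    have bound: "sum_lt_prob Y (n + j) Q \<le> exp (- c0 * (u + j / u))" for j :: nat
    proof -
      have "sum_lt_prob Y (n + j) Q \<le> exp (t*Q - real (n+j)*t*expect Y + real (n+j)*t^2*(\<integral>y. y^2 \<partial>Y)/2)"
        using kY by (intro chernoff t0) auto
      also have "\<dots> \<le> exp (- c0 * (u + j / u))"
      proof (subst exp_le_cancel_iff)
        show "t*Q - real (n+j)*t*expect Y + real (n+j)*t^2*(\<integral>y. y^2 \<partial>Y)/2 \<le> - c0 * (u + j / u)"
          using expo[OF u1 S0 mu0, of mu s Q t "real (n+j)" "real j"] kY Q u2 u3
          by (simp add: c0_def mu_def s_def t_def)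
      qed
      finally show ?thesis .
    qed
    have sb: "summable (\<lambda>j. sum_lt_prob Y (n + j) Q) \<and>
        (\<Sum>j. sum_lt_prob Y (n + j) Q) \<le> (1 + 2 / c0^2) * exp (- (c0/2) * u)"
    proof (rule series_bound[OF c0 u1])
      fix j show "0 \<le> sum_lt_prob Y (n + j) Q" by (simp add: sum_lt_prob_def)
      show "sum_lt_prob Y (n + j) Q \<le> exp (- c0 * (u + real j / u))" by (rule bound)
    qed
    have "exp (- (c0/2) * u) \<le> \<delta> powr (real n powr (1/4))"
    proof -
      have "real n powr (1/4) \<le> u" unfolding u_def by (rule powr_mono) (use n1 in auto)
      then have "- (c0/2) * u \<le> real n powr (1/4) * ln \<delta>" using c0 by (simp add: \<delta>_def)
      then show ?thesis using c0 by (simp add: powr_def \<delta>_def)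
    qed
    then have "(1 + 2 / c0^2) * exp (- (c0/2) * u) \<le> K * \<delta> powr (real n powr (1/4))"
      unfolding K_def by (intro mult_left_mono) (auto simp: c0)
    then show "summable (\<lambda>j. sum_lt_prob Y (n + j) Q)"
      "(\<Sum>j. sum_lt_prob Y (n + j) Q) \<le> K * \<delta> powr (real n powr (1/4))" using sb by auto
  qed
qed

end


theorem lemma3:
  fixes f :: "real \<Rightarrow> real" and C lam :: real and m :: real
  assumes f_meas: "f \<in> borel_measurable borel"
    and f_nonneg: "\<And>t. 0 \<le> f t"
    and f_zero_neg: "\<And>t. t < 0 \<Longrightarrow> f t = 0"
    and f_prob: "(\<integral>\<^sup>+ t. ennreal (f t) \<partial>lborel) = 1"
    and C_pos: "C > 0" and lam_pos: "lam > 0"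
    and f_tail: "\<And>t. t \<ge> 0 \<Longrightarrow> f t \<le> C * exp (- lam * t)"
    and f_pieces: "\<exists>P. finite P \<and> (\<forall>I\<in>P. is_interval I \<and> I \<noteq> {})
                      \<and> (\<forall>I\<in>P. \<forall>J\<in>P. I \<noteq> J \<longrightarrow> I \<inter> J = {})
                      \<and> \<Union>P = {t. f t > 0}
                      \<and> (\<forall>I\<in>P. f differentiable_on I \<and> (mono_on I f \<or> antimono_on I f))"
    and small_x: "\<exists>C' \<epsilon>0. \<epsilon>0 > 0 \<and>
                    (\<forall>x. chi_min (law f) < x \<and> x < chi_min (law f) + \<epsilon>0
                          \<longrightarrow> x \<le> C' * expect (cond_le (law f) x))"
    and m_range: "chi_min (law f) < m" "ereal m < chi_max (law f)"
  shows "\<exists>\<delta> K. 0 < \<delta> \<and> \<delta> < 1 \<and>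
           (\<forall>Y n Q. reasonable (law f) m Y \<longrightarrow> n \<ge> 1 \<longrightarrow>
              Q \<le> (real n - real n powr (2/3)) * expect Y \<longrightarrow>
              summable (\<lambda>j. sum_lt_prob Y (n + j) Q) \<and>
              (\<Sum>j. sum_lt_prob Y (n + j) Q) \<le> K * \<delta> powr (real n powr (1/4)))"
proof -
  interpret dens f C lam
    by unfold_locales (use f_meas f_nonneg f_zero_neg f_prob C_pos lam_pos f_tail in auto)
  show ?thesis using main[OF m_range] by simp
qed

end
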